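(* Let $n$ be a nonnegative integer. Then $$\sum_{r=0}^n(-1)^{r+n}\zeta(\{1\}^r,n+2-r)=\begin{cases}\zeta^\star(\{2\}^{m+1}),& n=2m,\\ 0,& n=2m+1.\end{cases}$$
   Context: $\zeta(\alpha_1,\ldots,\alpha_k)=\sum_{1\le k_1<\cdots<k_k}k_1^{-\alpha_1}\cdots k_k^{-\alpha_k}$ and $\zeta^\star(\alpha_1,\ldots,\alpha_k)=\sum_{1\le k_1\le\cdots\le k_k}k_1^{-\alpha_1}\cdots k_k^{-\alpha_k}$; $\{a\}^k$ denotes $k$ repetitions of $a$. *)

theory Defs
  imports "HOL-Analysis.Analysis"
begin

definition mzv_term :: "nat list \<Rightarrow> nat list \<Rightarrow> real" where
  "mzv_term s ks = prod_list (map2 (\<lambda>k a. 1 / real k ^ a) ks s)"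

definition mzv :: "nat list \<Rightarrow> real" where
  "mzv s = infsum (mzv_term s)
     {ks. length ks = length s \<and> sorted_wrt (<) ks \<and> (\<forall>k\<in>set ks. 1 \<le> k)}"

definition mzv_star :: "nat list \<Rightarrow> real" where
  "mzv_star s = infsum (mzv_term s)
     {ks. length ks = length s \<and> sorted_wrt (\<le>) ks \<and> (\<forall>k\<in>set ks. 1 \<le> k)}"

end

theory Submission
  imports Defs "HOL-Real_Asymp.Real_Asymp"
begin


definition Qp :: "'a::field_char_0 \<Rightarrow> nat \<Rightarrow> 'a" where
  "Qp z k = (\<Prod>j=1..k. 1 + z / of_nat j)"
definition Rp :: "'a::field_char_0 \<Rightarrow> nat \<Rightarrow> 'a" where
  "Rp z k = (\<Prod>j=1..k. 1 - z / of_nat j)"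
definition cc :: "'a::field_char_0 \<Rightarrow> nat \<Rightarrow> 'a" where
  "cc z j = (-1)^j * (z gchoose j)"

lemma Qp_0 [simp]: "Qp z 0 = 1" by (simp add: Qp_def)
lemma Rp_0 [simp]: "Rp z 0 = 1" by (simp add: Rp_def)
lemma Qp_Suc: "Qp z (Suc k) = Qp z k * (1 + z / of_nat (Suc k))"
  by (simp add: Qp_def prod.cl_ivl_Suc)
lemma Rp_Suc: "Rp z (Suc k) = Rp z k * (1 - z / of_nat (Suc k))"
  by (simp add: Rp_def prod.cl_ivl_Suc)

lemma Qp_poch0: "pochhammer (1+z) k = fact k * Qp (z::'a::field_char_0) k"
proof (induction k)
  case 0 then show ?case by simp
next
  case (Suc k)
  have "(1 + of_nat k::'a) \<noteq> 0" by (metis of_nat_Suc of_nat_neq_0)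
  then show ?case using Suc
    by (simp add: Qp_Suc pochhammer_Suc field_simps del: of_nat_Suc) (simp add: algebra_simps)
qed

lemma Qp_poch: "Qp (z::'a::field_char_0) k = pochhammer (1+z) k / fact k"
  by (simp add: Qp_poch0)

lemma Rp_poch0: "pochhammer (1-z) k = fact k * Rp (z::'a::field_char_0) k"
proof (induction k)
  case 0 then show ?case by simp
next
  case (Suc k)
  have "(1 + of_nat k::'a) \<noteq> 0" by (metis of_nat_Suc of_nat_neq_0)
  then show ?case using Suc
    by (simp add: Rp_Suc pochhammer_Suc field_simps del: of_nat_Suc) (simp add: algebra_simps)
qed

lemma Rp_poch: "Rp (z::'a::field_char_0) k = pochhammer (1-z) k / fact k"
  by (simp add: Rp_poch0)

lemma cc_poch: "cc (z::'a::field_char_0) j = pochhammer (-z) j / fact j"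
  by (simp add: cc_def gbinomial_pochhammer power_mult_distrib[symmetric])

lemma Qp_gchoose: "Qp (z::'a::field_char_0) k = (-1)^k * ((-1-z) gchoose k)"
  by (simp add: Qp_poch gbinomial_pochhammer power_mult_distrib[symmetric] algebra_simps)

lemma cc_Suc: "cc (z::'a::field_char_0) (Suc j) = - z * Rp z j / of_nat (Suc j)"
  by (simp add: cc_poch Rp_poch pochhammer_rec field_simps del: of_nat_Suc)

lemma V0: "(\<Sum>k=0..M. Qp (z::'a::field_char_0) k * cc z (M-k)) = 1"
proof -
  have "(\<Sum>k=0..M. Qp z k * cc z (M-k)) = (\<Sum>k=0..M. (-1)^M * (((-1-z) gchoose k) * (z gchoose (M-k))))"
  proof (intro sum.cong refl)
    fix k assume "k \<in> {0..M}"
    then have "(-1::'a)^k * (-1)^(M-k) = (-1)^M" by (simp add: power_add[symmetric])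
    then show "Qp z k * cc z (M-k) = (-1)^M * (((-1-z) gchoose k) * (z gchoose (M-k)))"
      unfolding Qp_gchoose cc_def by (metis (no_types, lifting) mult.assoc mult.left_commute)
  qed
  also have "\<dots> = (-1)^M * ((-1) gchoose M)"
    by (simp add: sum_distrib_left[symmetric] gbinomial_Vandermonde)
  also have "\<dots> = 1"
    by (simp add: gbinomial_pochhammer pochhammer_fact[symmetric] power_mult_distrib[symmetric])
  finally show ?thesis .
qed

lemma alg1:
  fixes z P V Q D E :: "'a::field_char_0"
  assumes "D \<noteq> 0" "E \<noteq> 0" "D = E + z" "z*P*Q = Q - 1" "z*V = Q - 1"
  shows "z * (P - z*((P+V)/D) + Q/D) * (Q*(D/E)) = Q*(D/E) - 1"
proof -
  have "z * (P - z*((P+V)/D) + Q/D) * (Q*(D/E)) = (z*P*Q*D - z*(z*P*Q) - z*(z*V)*Q + z*Q*Q)/E"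
    using assms(1,2) by (simp add: field_simps) 
  also have "\<dots> = (z*P*Q*E + z*Q)/E"
    unfolding assms(3,4,5) by (simp add: algebra_simps)
  also have "\<dots> = Q*(D/E) - 1"
    unfolding assms(3,4) using assms(1,2) by (simp add: field_simps)
  finally show ?thesis .
qed
lemma pf:
  fixes X d1 d2 d3 :: "'a::field_char_0"
  assumes "d1 \<noteq> 0" "d2 \<noteq> 0" "d3 \<noteq> 0" "d3 = d1 + d2"
  shows "X / (d1 * d2) = (X/d1 + X/d2) / d3"
proof -
  have "X/d1 + X/d2 = X*d3/(d1*d2)" using assms by (simp add: field_simps)
  then show ?thesis using assms(3) by simp
qed

lemma alg2:
  fixes Q R z d1 d2 :: "'a::field_char_0"
  assumes "d1 \<noteq> 0" "d2 \<noteq> 0"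
  shows "Q*(R*(1 - z/d2))/d1 = Q*R/d1 - z*(Q*R/(d1*d2))"
  using assms by (simp add: field_simps)

lemma V1: "z * (\<Sum>i<M. Qp (z::'a::field_char_0) i * Rp z (M-1-i) / of_nat (M-i)) = Qp z M - 1"
proof -
  have "z * (\<Sum>i<M. Qp z i * Rp z (M-1-i) / of_nat (M-i)) = (\<Sum>i<M. - (Qp z i * cc z (M-i)))"
    unfolding sum_distrib_left
  proof (intro sum.cong refl)
    fix i assume "i \<in> {..<M}"
    then have "M - i = Suc (M-1-i)" by auto
    then show "z * (Qp z i * Rp z (M-1-i) / of_nat (M-i)) = - (Qp z i * cc z (M-i))"
      by (simp only: cc_Suc) (simp add: field_simps)
  qed
  also have "\<dots> = - (\<Sum>i<M. Qp z i * cc z (M-i))" by (simp add: sum_negf)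
  also have "(\<Sum>i<M. Qp z i * cc z (M-i)) = 1 - Qp z M"
  proof -
    have "(\<Sum>k=0..M. Qp z k * cc z (M-k)) = (\<Sum>i<M. Qp z i * cc z (M-i)) + Qp z M * cc z 0"
      by (simp add: atLeast0AtMost lessThan_Suc_atMost[symmetric])
    then show ?thesis using V0[where M=M and z=z] by (simp add: cc_def eq_diff_eq)
  qed
  finally show ?thesis by simp
qed

lemma Qp_nz:
  assumes "\<And>j. j \<ge> 1 \<Longrightarrow> of_nat j + (z::'a::field_char_0) \<noteq> 0"
  shows "Qp z k \<noteq> 0"
proof -
  have "\<forall>j\<in>{1..k}. 1 + z / of_nat j \<noteq> 0"
  proof
    fix j assume j: "j \<in> {1..k}"
    then have "(of_nat j::'a) \<noteq> 0" by auto
    moreover have "of_nat j + z \<noteq> 0" using assms j by auto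
    ultimately show "1 + z / of_nat j \<noteq> 0" by (simp add: field_simps add.commute)
  qed
  then show ?thesis unfolding Qp_def by (simp add: prod_zero_iff)
qed

lemma Rp_nz:
  assumes "\<And>j. j \<ge> 1 \<Longrightarrow> of_nat j - (z::'a::field_char_0) \<noteq> 0"
  shows "Rp z k \<noteq> 0"
proof -
  have "\<forall>j\<in>{1..k}. 1 - z / of_nat j \<noteq> 0"
  proof
    fix j assume j: "j \<in> {1..k}"
    then have "(of_nat j::'a) \<noteq> 0" by auto
    moreover have "of_nat j - z \<noteq> 0" using assms j by auto
    ultimately show "1 - z / of_nat j \<noteq> 0" by (simp add: field_simps add.commute)
  qed
  then show ?thesis unfolding Rp_def by (simp add: prod_zero_iff)
qed

definition Phi :: "'a::field_char_0 \<Rightarrow> nat \<Rightarrow> 'a" where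
  "Phi z M = (\<Sum>i<M. Qp z i * Rp z (M-1-i) / (of_nat i + 1 + z))"
definition Vp :: "'a::field_char_0 \<Rightarrow> nat \<Rightarrow> 'a" where
  "Vp z M = (\<Sum>i<M. Qp z i * Rp z (M-1-i) / of_nat (M-i))"
definition Psi :: "'a::field_char_0 \<Rightarrow> nat \<Rightarrow> 'a" where
  "Psi z M = (\<Sum>i<M. Qp z i * Rp z (M-1-i) / ((of_nat i + 1 + z) * of_nat (M-i)))"

lemma Psi_eq:
  assumes "\<And>j. j \<ge> 1 \<Longrightarrow> of_nat j + (z::'a::field_char_0) \<noteq> 0"
  shows "Psi z M = (Phi z M + Vp z M) / (of_nat M + 1 + z)"
proof -
  have M: "of_nat M + 1 + z \<noteq> 0" using assms[of "Suc M"] by (simp add: add.commute)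
  have "Psi z M = (\<Sum>i<M. (Qp z i * Rp z (M-1-i) / (of_nat i + 1 + z) + Qp z i * Rp z (M-1-i) / of_nat (M-i)) / (of_nat M + 1 + z))"
    unfolding Psi_def
  proof (intro sum.cong refl)
    fix i assume i: "i \<in> {..<M}"
    have i1: "of_nat i + 1 + z \<noteq> 0" using assms[of "Suc i"] by (simp add: add.commute)
    have i2: "(of_nat (M-i)::'a) \<noteq> 0" using i by auto
    have i3: "(of_nat (M-i)::'a) = of_nat M - of_nat i" using i by (simp add: of_nat_diff)
    show "Qp z i * Rp z (M-1-i) / ((of_nat i + 1 + z) * of_nat (M-i)) =
      (Qp z i * Rp z (M-1-i) / (of_nat i + 1 + z) + Qp z i * Rp z (M-1-i) / of_nat (M-i)) / (of_nat M + 1 + z)"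
      by (rule pf[OF i1 i2 M]) (simp add: i3)
  qed
  also have "\<dots> = (Phi z M + Vp z M) / (of_nat M + 1 + z)"
    unfolding Phi_def Vp_def by (simp add: sum_divide_distrib[symmetric] sum.distrib)
  finally show ?thesis .
qed

lemma Phi_Suc:
  assumes "\<And>j. j \<ge> 1 \<Longrightarrow> of_nat j + (z::'a::field_char_0) \<noteq> 0"
  shows "Phi z (Suc M) = Phi z M - z * Psi z M + Qp z M / (of_nat M + 1 + z)"
proof -
  have "Phi z (Suc M) = (\<Sum>i<M. Qp z i * Rp z (M-i) / (of_nat i + 1 + z)) + Qp z M / (of_nat M + 1 + z)"
    unfolding Phi_def by simp
  also have "(\<Sum>i<M. Qp z i * Rp z (M-i) / (of_nat i + 1 + z)) =
     (\<Sum>i<M. Qp z i * Rp z (M-1-i) / (of_nat i + 1 + z) - z * (Qp z i * Rp z (M-1-i) / ((of_nat i + 1 + z) * of_nat (M-i))))"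
  proof (intro sum.cong refl)
    fix i assume i: "i \<in> {..<M}"
    have i1: "of_nat i + 1 + z \<noteq> 0" using assms[of "Suc i"] by (simp add: add.commute)
    have i2: "(of_nat (M-i)::'a) \<noteq> 0" using i by auto
    have "M - i = Suc (M-1-i)" using i by auto
    then have "Rp z (M-i) = Rp z (M-1-i) * (1 - z / of_nat (M-i))" by (simp only: Rp_Suc)
    then show "Qp z i * Rp z (M-i) / (of_nat i + 1 + z) =
       Qp z i * Rp z (M-1-i) / (of_nat i + 1 + z) - z * (Qp z i * Rp z (M-1-i) / ((of_nat i + 1 + z) * of_nat (M-i)))"
      using alg2[OF i1 i2] by simp
  qed
  also have "\<dots> = Phi z M - z * Psi z M"
    unfolding Phi_def Psi_def by (simp add: sum_subtractf sum_distrib_left)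
  finally show ?thesis .
qed

lemma Phi_closed:
  assumes "\<And>j. j \<ge> 1 \<Longrightarrow> of_nat j + (z::'a::field_char_0) \<noteq> 0"
  shows "z * Phi z M * Qp z M = Qp z M - 1"
proof (induction M)
  case 0 then show ?case by (simp add: Phi_def)
next
  case (Suc M)
  have M: "of_nat M + 1 + z \<noteq> 0" using assms[of "Suc M"] by (simp add: add.commute)
  have M1: "(of_nat M + 1 :: 'a) \<noteq> 0" by (metis of_nat_Suc of_nat_neq_0 add.commute)
  have V: "z * Vp z M = Qp z M - 1" using V1[of z M] by (simp add: Vp_def)
  have QS: "Qp z (Suc M) = Qp z M * (1 + z / (of_nat M + 1))" by (simp add: Qp_Suc add.commute)
  have E: "Qp z (Suc M) = Qp z M * ((of_nat M + 1 + z) / (of_nat M + 1))"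
    using M1 by (simp add: Qp_Suc add.commute field_simps)
  have PS: "Phi z (Suc M) = Phi z M - z * ((Phi z M + Vp z M) / (of_nat M + 1 + z)) + Qp z M / (of_nat M + 1 + z)"
    using Phi_Suc[OF assms, of M] Psi_eq[OF assms, of M] by simp
  show ?case unfolding E PS
    by (rule alg1[OF M M1 _ Suc V]) simp
qed

lemma alg3:
  fixes Q R z a d1 d2 E :: "'a::field_char_0"
  assumes "a \<noteq> 0" "d1 \<noteq> 0" "d2 \<noteq> 0" "E \<noteq> 0" "d1 = a + z" "E = a + d2"
  shows "Q/(a*d1) * (R*(1 - z/d2)) = (1 - z/E)*(Q/(a*d1)*R) - (z/E)*(Q*R/(d1*d2))"
proof -
  have h1: "1 - z/E - z*a/(E*d2) = (E*d2 - z*(a+d2))/(E*d2)"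
    using assms(2-4) by (simp add: field_simps)
  have h: "1 - z/E - z*a/(E*d2) = 1 - z/d2"
    unfolding h1 assms(6)[symmetric] using assms(3,4) by (simp add: field_simps)
  have "(1 - z/E)*(Q/(a*d1)*R) - (z/E)*(Q*R/(d1*d2)) = (Q*R/(a*d1)) * (1 - z/E - z*a/(E*d2))"
    using assms(1-4) by (simp add: field_simps)
  also have "\<dots> = Q/(a*d1) * (R*(1 - z/d2))" unfolding h by simp
  finally show ?thesis by simp
qed

lemma alg4:
  fixes Q P V z D E :: "'a::field_char_0"
  assumes "D \<noteq> 0" "E \<noteq> 0" "Q \<noteq> 0" "D = E + z" "z*P*Q = Q - 1" "z*V = Q - 1"
  shows "Q/(E*D) - (z/E)*((P+V)/D) = 1/(E^2*(Q*(D/E)))"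
proof -
  have zP: "z*P = (Q-1)/Q" using assms(3,5) by (simp add: field_simps)
  have "Q/(E*D) - (z/E)*((P+V)/D) = (Q - z*P - z*V)/(E*D)"
    using assms(1,2) by (simp add: field_simps)
  also have "\<dots> = (1/Q)/(E*D)" unfolding zP assms(6) using assms(3)
    by (simp add: field_simps)
  also have "\<dots> = 1/(E^2*(Q*(D/E)))" using assms(1,2,3) by (simp add: field_simps power2_eq_square)
  finally show ?thesis .
qed

definition Lf :: "'a::field_char_0 \<Rightarrow> nat \<Rightarrow> 'a" where
  "Lf z N = (\<Sum>i<N. Qp z i / ((of_nat i + 1) * (of_nat i + 1 + z)) * Rp z (N-1-i))"
definition Gf :: "'a::field_char_0 \<Rightarrow> nat \<Rightarrow> 'a" where
  "Gf z N = (\<Sum>l<N. 1 / ((of_nat l + 1)^2 * (Qp z (Suc l) * Rp z (Suc l))))"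

lemma A_id:
  assumes nz1: "\<And>j. j \<ge> 1 \<Longrightarrow> of_nat j + (z::'a::field_char_0) \<noteq> 0"
  assumes nz2: "\<And>j. j \<ge> 1 \<Longrightarrow> of_nat j - z \<noteq> 0"
  shows "Lf z N = Rp z N * Gf z N"
proof (induction N)
  case 0 then show ?case by (simp add: Lf_def Gf_def)
next
  case (Suc M)
  define E :: 'a where "E = of_nat M + 1"
  define D where "D = E + z"
  have E0: "E \<noteq> 0" unfolding E_def by (metis of_nat_Suc of_nat_neq_0 add.commute)
  have D0: "D \<noteq> 0" unfolding D_def E_def using nz1[of "Suc M"] by (simp add: add.commute add.left_commute)
  have Q0: "Qp z M \<noteq> 0" by (rule Qp_nz[OF nz1])
  have V: "z * Vp z M = Qp z M - 1" using V1[of z M] by (simp add: Vp_def)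
  have QS: "Qp z (Suc M) = Qp z M * (D / E)"
    using E0 unfolding D_def E_def by (simp add: Qp_Suc add.commute field_simps)
  have RS: "Rp z (Suc M) = Rp z M * (1 - z / E)"
    unfolding E_def by (simp add: Rp_Suc add.commute)
  have RS0: "Rp z (Suc M) \<noteq> 0" by (rule Rp_nz[OF nz2])
  have L1: "Lf z (Suc M) = (\<Sum>i<M. (1 - z/E) * (Qp z i / ((of_nat i + 1) * (of_nat i + 1 + z)) * Rp z (M-1-i))
       - (z/E) * (Qp z i * Rp z (M-1-i) / ((of_nat i + 1 + z) * of_nat (M-i)))) + Qp z M / (E * D)"
  proof -
    have eq1: "Lf z (Suc M) = (\<Sum>i<M. Qp z i / ((of_nat i + 1) * (of_nat i + 1 + z)) * Rp z (M-i)) + Qp z M / (E * D)"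
      unfolding Lf_def D_def E_def by (simp add: add.assoc)
    have eq2: "(\<Sum>i<M. Qp z i / ((of_nat i + 1) * (of_nat i + 1 + z)) * Rp z (M-i)) =
      (\<Sum>i<M. (1 - z/E) * (Qp z i / ((of_nat i + 1) * (of_nat i + 1 + z)) * Rp z (M-1-i))
       - (z/E) * (Qp z i * Rp z (M-1-i) / ((of_nat i + 1 + z) * of_nat (M-i))))"
    proof (intro sum.cong refl)
      fix i assume i: "i \<in> {..<M}"
      have a0: "(of_nat i + 1 :: 'a) \<noteq> 0" by (metis of_nat_Suc of_nat_neq_0 add.commute)
      have d1: "of_nat i + 1 + z \<noteq> 0" using nz1[of "Suc i"] by (simp add: add.commute)
      have d2: "(of_nat (M-i)::'a) \<noteq> 0" using i by auto
      have Ei: "E = (of_nat i + 1) + of_nat (M-i)" unfolding E_def using i by (simp add: of_nat_diff)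
      have "M - i = Suc (M-1-i)" using i by auto
      then have "Rp z (M-i) = Rp z (M-1-i) * (1 - z / of_nat (M-i))" by (simp only: Rp_Suc)
      then show "Qp z i / ((of_nat i + 1) * (of_nat i + 1 + z)) * Rp z (M-i) =
        (1 - z/E) * (Qp z i / ((of_nat i + 1) * (of_nat i + 1 + z)) * Rp z (M-1-i))
       - (z/E) * (Qp z i * Rp z (M-1-i) / ((of_nat i + 1 + z) * of_nat (M-i)))"
        using alg3[OF a0 d1 d2 E0 refl Ei] by simp
    qed
    show ?thesis unfolding eq1 eq2 ..
  qed
  have LS: "Lf z (Suc M) = (1 - z/E) * Lf z M - (z/E) * Psi z M + Qp z M / (E * D)"
    by (subst L1) (simp add: Lf_def Psi_def sum_subtractf sum_distrib_left)
  have K: "Qp z M / (E * D) - (z/E) * Psi z M = 1/(E^2*(Qp z (Suc M)))"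
  proof -
    have PsE: "Psi z M = (Phi z M + Vp z M)/D" using Psi_eq[OF nz1, of M] by (simp add: D_def E_def)
    show ?thesis unfolding PsE QS
      by (rule alg4[OF D0 E0 Q0 _ Phi_closed[OF nz1] V]) (simp add: D_def)
  qed
  have RSG: "Rp z (Suc M) * Gf z (Suc M) = (1 - z/E) * (Rp z M * Gf z M) + 1/(E^2*(Qp z (Suc M)))"
  proof -
    have "Gf z (Suc M) = Gf z M + 1/(E^2 * (Qp z (Suc M) * Rp z (Suc M)))"
      unfolding Gf_def E_def by simp
    moreover have "Qp z (Suc M) \<noteq> 0" by (rule Qp_nz[OF nz1])
    ultimately have "Rp z (Suc M) * Gf z (Suc M) = Rp z (Suc M) * Gf z M + 1/(E^2*(Qp z (Suc M)))"
      using RS0 E0 by (simp add: field_simps)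
    then show ?thesis unfolding RS by simp
  qed
  have "Lf z (Suc M) = (1 - z/E) * Lf z M + (Qp z M / (E * D) - (z/E) * Psi z M)"
    using LS by (simp add: algebra_simps)
  also have "\<dots> = (1 - z/E) * (Rp z M * Gf z M) + 1/(E^2*(Qp z (Suc M)))"
    using K Suc.IH by simp
  also have "\<dots> = Rp z (Suc M) * Gf z (Suc M)" using RSG by simp
  finally show ?case .
qed



primrec ee :: "nat \<Rightarrow> nat \<Rightarrow> real" where
  "ee 0 k = 1"
| "ee (Suc r) k = (\<Sum>j=1..k. ee r (j-1) / real j)"

primrec hh :: "nat \<Rightarrow> nat \<Rightarrow> real" where
  "hh 0 l = 1"
| "hh (Suc m) l = (\<Sum>j=1..l. hh m j / real j ^ 2)"

lemma ee_zero: "ee r 0 = (if r = 0 then 1 else 0)"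
  by (cases r) auto

lemma ee_Suc_Suc: "ee (Suc r) (Suc k) = ee (Suc r) k + ee r k / real (Suc k)"
  by simp

lemma hh_zero: "hh m 0 = (if m = 0 then 1 else 0)"
  by (cases m) auto

lemma hh_Suc_Suc: "hh (Suc m) (Suc l) = hh (Suc m) l + hh m (Suc l) / real (Suc l) ^ 2"
  by simp

definition geo :: "complex \<Rightarrow> complex fps" where
  "geo c = inverse (1 - fps_const c * fps_X)"

lemma geo_eq: "geo c = Abs_fps (\<lambda>n. c ^ n)"
  unfolding geo_def
proof (rule fps_inverse_unique, rule fps_ext)
  fix n
  show "fps_nth ((1 - fps_const c * fps_X) * Abs_fps (\<lambda>n. c ^ n)) n = fps_nth 1 n"
    by (cases n) (simp_all add: algebra_simps mult.assoc)
qed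

lemma geo_nth [simp]: "fps_nth (geo c) n = c ^ n"
  by (simp add: geo_eq)

lemma geo_mult: "(1 - fps_const c * fps_X) * geo c = 1"
  unfolding geo_def by (rule inverse_mult_eq_1') simp

definition QF :: "nat \<Rightarrow> complex fps" where
  "QF k = (\<Prod>j=1..k. 1 + fps_const (1 / of_nat j) * fps_X)"

lemma QF_nth: "fps_nth (QF k) r = of_real (ee r k)"
proof (induction k arbitrary: r)
  case 0 then show ?case by (simp add: QF_def ee_zero)
next
  case (Suc k)
  have "QF (Suc k) = QF k + fps_const (1 / of_nat (Suc k)) * (fps_X * QF k)"
    by (simp add: QF_def prod.cl_ivl_Suc algebra_simps del: of_nat_Suc)
  then have "fps_nth (QF (Suc k)) r = fps_nth (QF k) r + (1 / of_nat (Suc k)) * (if r = 0 then 0 else fps_nth (QF k) (r - 1))"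
    by simp
  then show ?case using Suc by (cases r) (simp_all add: ee_zero)
qed

definition P2 :: "nat \<Rightarrow> complex fps" where
  "P2 l = (\<Prod>j=1..l. geo (-1 / of_nat j) * geo (1 / of_nat j))"

lemma P2_rec: "P2 (Suc l) = P2 l + fps_const (1 / of_nat (Suc l) ^ 2) * (fps_X^2 * P2 (Suc l))"
proof -
  define c :: complex where "c = 1 / of_nat (Suc l)"
  define a where "a = 1 - fps_const (-c) * fps_X"
  define b where "b = 1 - fps_const c * fps_X"
  have g1: "a * geo (-c) = 1" unfolding a_def by (rule geo_mult)
  have g2: "b * geo c = 1" unfolding b_def by (rule geo_mult)
  have PS: "P2 (Suc l) = P2 l * (geo (-c) * geo c)"
    by (simp add: P2_def prod.cl_ivl_Suc c_def del: of_nat_Suc)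
  have ab: "a * b = 1 - (fps_const c * fps_X)^2"
    unfolding a_def b_def by (simp add: algebra_simps power2_eq_square)
  have sq: "(fps_const c * fps_X)^2 = fps_const (1 / of_nat (Suc l) ^ 2) * fps_X^2"
    by (simp add: power_mult_distrib fps_const_power c_def power_divide)
  have "(a * b) * P2 (Suc l) = P2 l * ((a * geo (-c)) * (b * geo c))"
    unfolding PS by (simp add: mult_ac)
  then have "(a * b) * P2 (Suc l) = P2 l" unfolding g1 g2 by simp
  then have "P2 (Suc l) - fps_const (1 / of_nat (Suc l) ^ 2) * (fps_X^2 * P2 (Suc l)) = P2 l"
    unfolding ab sq by (simp add: left_diff_distrib mult.assoc)
  then show ?thesis by (simp add: diff_eq_eq add.commute)
qed

lemma P2_nth: "fps_nth (P2 l) n = (if even n then of_real (hh (n div 2) l) else 0)"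
proof (induction l arbitrary: n)
  case 0
  have "P2 0 = 1" by (simp add: P2_def)
  then show ?case by (cases "n = 0") (auto simp: hh_zero)
next
  case (Suc l)
  show ?case
  proof (induction n rule: less_induct)
    case (less n)
    have rec: "fps_nth (P2 (Suc l)) n = fps_nth (P2 l) n + (1 / of_nat (Suc l) ^ 2) * (if n < 2 then 0 else fps_nth (P2 (Suc l)) (n - 2))"
      by (subst P2_rec) (simp add: fps_X_power_mult_nth del: of_nat_Suc)
    show ?case
    proof (cases "n < 2")
      case True
      then have "n = 0 \<or> n = 1" by auto
      then show ?thesis using rec Suc.IH[of n] by auto
    next
      case False
      then have IH2: "fps_nth (P2 (Suc l)) (n-2) = (if even (n-2) then of_real (hh ((n-2) div 2) (Suc l)) else 0)"
        using less.IH[of "n-2"] by simp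
      have ev: "even (n-2) = even n" using False by auto
      show ?thesis
      proof (cases "even n")
        case True
        define m where "m = n div 2 - 1"
        have m: "n = Suc (Suc (2*m))" using True False unfolding m_def by (auto elim!: evenE)
        have "fps_nth (P2 (Suc l)) n = of_real (hh (Suc m) l) + (1 / of_nat (Suc l) ^ 2) * of_real (hh m (Suc l))"
          using rec Suc.IH[of n] IH2 m by simp
        also have "\<dots> = of_real (hh (Suc m) (Suc l))"
          by (simp add: hh_Suc_Suc del: hh.simps of_nat_Suc)
        finally show ?thesis using m by simp
      next
        case False
        then show ?thesis using rec Suc.IH[of n] IH2 ev by simp
      qed
    qed
  qed
qed



lemma sum_pow_le:
  fixes a b :: real
  assumes "0 \<le> a" "0 \<le> b"
  shows "(\<Sum>i=0..q. a^i * b^(q-i)) \<le> (a+b)^q"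
proof -
  have "(\<Sum>i=0..q. a^i * b^(q-i)) \<le> (\<Sum>i=0..q. of_nat (q choose i) * a^i * b^(q-i))"
  proof (rule sum_mono)
    fix i assume "i \<in> {0..q}"
    then have "1 \<le> real (q choose i)" by (simp add: Suc_leI)
    moreover have "0 \<le> a^i * b^(q-i)" using assms by simp
    ultimately show "a^i * b^(q-i) \<le> of_nat (q choose i) * a^i * b^(q-i)"
      by (metis mult_le_cancel_right1 mult.assoc not_le order_less_le_trans zero_less_mult_iff mult_nonneg_nonneg less_le_not_le)
  qed
  also have "\<dots> = (a+b)^q" by (simp add: binomial_ring atLeast0AtMost)
  finally show ?thesis .
qed

lemma prodgeo_nth0:
  assumes "finite J"
  shows "fps_nth (\<Prod>j\<in>J. geo (c j)) 0 = 1"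
  using assms by (induction J rule: finite_induct) auto

lemma prodgeo_nth:
  assumes "finite J" "0 \<notin> J"
  shows "\<exists>x. fps_nth (\<Prod>j\<in>J. geo (1 / of_nat j)) q = of_real x \<and> 0 \<le> x \<and> x \<le> (\<Sum>j\<in>J. 1 / real j)^q"
  using assms
proof (induction J arbitrary: q rule: finite_induct)
  case empty
  show ?case by (rule exI[of _ "if q = 0 then 1 else 0"]) auto
next
  case (insert j J)
  then have "\<forall>t. \<exists>x. fps_nth (\<Prod>j\<in>J. geo (1 / of_nat j)) t = of_real x \<and> 0 \<le> x \<and> x \<le> (\<Sum>j\<in>J. 1 / real j)^t"
    by auto
  then obtain f where f: "\<And>t. fps_nth (\<Prod>j\<in>J. geo (1 / of_nat j)) t = of_real (f t) \<and> 0 \<le> f t \<and> f t \<le> (\<Sum>j\<in>J. 1 / real j)^t"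
    by metis
  define D where "D = (\<Sum>j\<in>J. 1 / real j)"
  have D0: "0 \<le> D" unfolding D_def by (intro sum_nonneg) auto
  have "fps_nth (\<Prod>j\<in>insert j J. geo (1 / of_nat j)) q = (\<Sum>i=0..q. (1 / of_nat j)^i * fps_nth (\<Prod>j\<in>J. geo (1 / of_nat j)) (q-i))"
    using insert by (simp add: fps_mult_nth)
  also have "\<dots> = of_real (\<Sum>i=0..q. (1 / real j)^i * f (q-i))"
    using f by (simp add: of_real_sum)
  finally have eq: "fps_nth (\<Prod>j\<in>insert j J. geo (1 / of_nat j)) q = of_real (\<Sum>i=0..q. (1 / real j)^i * f (q-i))" .
  have "(\<Sum>i=0..q. (1 / real j)^i * f (q-i)) \<le> (\<Sum>i=0..q. (1 / real j)^i * D^(q-i))"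
    using f unfolding D_def by (intro sum_mono mult_left_mono) auto
  also have "\<dots> \<le> (1 / real j + D)^q" by (rule sum_pow_le) (use D0 in auto)
  also have "1 / real j + D = (\<Sum>j\<in>insert j J. 1 / real j)" using insert unfolding D_def by simp
  finally show ?case using eq f by (intro exI[of _ "\<Sum>i=0..q. (1 / real j)^i * f (q-i)"]) (auto intro!: sum_nonneg)
qed

lemma exp_geo: "(\<lambda>z::complex. inverse (1 - c * z)) has_fps_expansion geo c"
  unfolding geo_def by (intro has_fps_expansion_inverse fps_expansion_intros) simp

lemma exp_QF: "(\<lambda>z::complex. \<Prod>j=1..i. 1 + (1 / of_nat j) * z) has_fps_expansion QF i"
  unfolding QF_def by (intro fps_expansion_intros)

lemma fps_exp_unique:
  fixes f g :: "complex \<Rightarrow> complex"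
  assumes "f has_fps_expansion F" "g has_fps_expansion G" "eventually (\<lambda>z. f z = g z) (nhds 0)"
  shows "F = G"
proof (rule eval_fps_eqD)
  show "fps_conv_radius F > 0" "fps_conv_radius G > 0" using assms by (auto simp: has_fps_expansion_def)
  have "eventually (\<lambda>z. eval_fps F z = f z) (nhds 0)" "eventually (\<lambda>z. eval_fps G z = g z) (nhds 0)"
    using assms by (auto simp: has_fps_expansion_def)
  with assms(3) show "eventually (\<lambda>z. eval_fps F z = eval_fps G z) (nhds 0)"
    by eventually_elim simp
qed



definition Fa :: "nat \<Rightarrow> complex fps" where
  "Fa i = fps_const (1 / of_nat (Suc i) ^ 2) * QF i * geo (-1 / of_nat (Suc i))"
definition Fw :: "nat \<Rightarrow> nat \<Rightarrow> complex fps" where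
  "Fw N i = (\<Prod>j\<in>{N-i..N}. geo (1 / of_nat j))"
definition FG :: "nat \<Rightarrow> complex fps" where
  "FG N = (\<Sum>l<N. fps_const (1 / of_nat (Suc l) ^ 2) * P2 (Suc l))"

lemma nz_small:
  fixes z :: complex
  assumes "norm z < 1/2" "j \<ge> 1"
  shows "of_nat j + z \<noteq> 0" "of_nat j - z \<noteq> 0"
proof -
  have "real j \<ge> 1" using assms(2) by simp
  show "of_nat j + z \<noteq> 0"
  proof
    assume "of_nat j + z = 0"
    then have "z = - of_nat j" by (metis add_eq_0_iff)
    then have "norm z = real j" by simp
    then show False using assms \<open>real j \<ge> 1\<close> by simp
  qed
  show "of_nat j - z \<noteq> 0"
  proof
    assume "of_nat j - z = 0"
    then have "z = of_nat j" by simp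
    then have "norm z = real j" by simp
    then show False using assms \<open>real j \<ge> 1\<close> by simp
  qed
qed

lemma Rp_split:
  assumes "i < N"
  shows "Rp z N = Rp z (N-1-i) * (\<Prod>j\<in>{N-i..N}. 1 - z / of_nat j)"
proof -
  define m where "m = N-1-i"
  have m1: "N - i = Suc m" using assms unfolding m_def by simp
  have m2: "m \<le> N" unfolding m_def by simp
  have "{1..N} = {1..m} \<union> {Suc m..N}" using m2 by auto
  moreover have "{1..m} \<inter> {Suc m..N} = {}" by auto
  ultimately show ?thesis unfolding Rp_def m1 m_def[symmetric] by (simp add: prod.union_disjoint)
qed

lemma alg5:
  fixes k z Q :: complex
  assumes "k \<noteq> 0" "k + z \<noteq> 0"
  shows "(1 / k^2) * Q * inverse (1 - (-1 / k) * z) = Q / (k * (k + z))"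
proof -
  have "1 - (-1 / k) * z = (k + z) / k" using assms by (simp add: field_simps)
  then show ?thesis using assms by (simp add: power2_eq_square)
qed

lemma alg6:
  fixes P R1 RN :: complex
  assumes "RN = R1 * P" "R1 \<noteq> 0" "RN \<noteq> 0"
  shows "inverse P = R1 / RN"
  using assms by (simp add: field_simps)

lemma alg7:
  fixes k Q R :: complex
  shows "1 / (k^2 * (Q * R)) = (1 / k^2) * (inverse Q * inverse R)"
  by (simp add: divide_inverse inverse_mult_distrib mult_ac)

lemma func_id:
  fixes z :: complex
  assumes z: "norm z < 1/2"
  shows "(\<Sum>i<N. ((1 / of_nat (Suc i) ^ 2) * (\<Prod>j=1..i. 1 + (1 / of_nat j) * z) * inverse (1 - (-1 / of_nat (Suc i)) * z))
            * (\<Prod>j\<in>{N-i..N}. inverse (1 - (1 / of_nat j) * z)))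
       = (\<Sum>l<N. (1 / of_nat (Suc l) ^ 2) * (\<Prod>j=1..Suc l. inverse (1 - (-1 / of_nat j) * z) * inverse (1 - (1 / of_nat j) * z)))"
proof -
  have nz1: "\<And>j. j \<ge> 1 \<Longrightarrow> of_nat j + z \<noteq> 0" using nz_small[OF z] by blast
  have nz2: "\<And>j. j \<ge> 1 \<Longrightarrow> of_nat j - z \<noteq> 0" using nz_small[OF z] by blast
  have RN: "Rp z N \<noteq> 0" by (rule Rp_nz[OF nz2])
  have L: "(\<Sum>i<N. ((1 / of_nat (Suc i) ^ 2) * (\<Prod>j=1..i. 1 + (1 / of_nat j) * z) * inverse (1 - (-1 / of_nat (Suc i)) * z))
            * (\<Prod>j\<in>{N-i..N}. inverse (1 - (1 / of_nat j) * z)))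
     = (\<Sum>i<N. Qp z i / ((of_nat i + 1) * (of_nat i + 1 + z)) * Rp z (N-1-i) / Rp z N)"
  proof (intro sum.cong refl)
    fix i assume i: "i \<in> {..<N}"
    have k0: "(of_nat i + 1 :: complex) \<noteq> 0" by (metis of_nat_Suc of_nat_neq_0 add.commute)
    have k1: "of_nat i + 1 + z \<noteq> 0" using nz1[of "Suc i"] by (simp add: add.commute)
    have q: "(\<Prod>j=1..i. 1 + (1 / of_nat j) * z) = Qp z i" unfolding Qp_def by simp
    have a: "(1 / of_nat (Suc i) ^ 2) * Qp z i * inverse (1 - (-1 / of_nat (Suc i)) * z)
        = Qp z i / ((of_nat i + 1) * (of_nat i + 1 + z))"
      using alg5[OF k0 k1, of "Qp z i"] by (simp add: add.commute)
    have Rs: "Rp z (N-1-i) \<noteq> 0" by (rule Rp_nz[OF nz2])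
    have "(\<Prod>j\<in>{N-i..N}. inverse (1 - (1 / of_nat j) * z)) = inverse (\<Prod>j\<in>{N-i..N}. 1 - z / of_nat j)"
      using prod_inversef[of "\<lambda>j. 1 - z / of_nat j" "{N-i..N}"] by (simp add: o_def)
    also have "\<dots> = Rp z (N-1-i) / Rp z N"
      by (rule alg6[OF Rp_split Rs RN]) (use i in simp)
    finally show "((1 / of_nat (Suc i) ^ 2) * (\<Prod>j=1..i. 1 + (1 / of_nat j) * z) * inverse (1 - (-1 / of_nat (Suc i)) * z))
            * (\<Prod>j\<in>{N-i..N}. inverse (1 - (1 / of_nat j) * z)) = Qp z i / ((of_nat i + 1) * (of_nat i + 1 + z)) * Rp z (N-1-i) / Rp z N"
      unfolding q a by simp
  qed
  also have "\<dots> = Lf z N / Rp z N" unfolding Lf_def by (simp add: sum_divide_distrib)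
  also have "\<dots> = Gf z N" using A_id[OF nz1 nz2, of N] RN by simp
  also have "\<dots> = (\<Sum>l<N. (1 / of_nat (Suc l) ^ 2) * (\<Prod>j=1..Suc l. inverse (1 - (-1 / of_nat j) * z) * inverse (1 - (1 / of_nat j) * z)))"
    unfolding Gf_def
  proof (intro sum.cong refl)
    fix l assume "l \<in> {..<N}"
    have "(\<Prod>j=1..Suc l. inverse (1 - (-1 / of_nat j) * z) * inverse (1 - (1 / of_nat j) * z))
       = inverse (Qp z (Suc l)) * inverse (Rp z (Suc l))"
    proof -
      have e1: "(\<lambda>j. inverse (1 - (-1 / of_nat j) * z)) = inverse \<circ> (\<lambda>j. 1 + z / of_nat j)" by (rule ext) simp
      have e2: "(\<lambda>j. inverse (1 - (1 / of_nat j) * z)) = inverse \<circ> (\<lambda>j. 1 - z / of_nat j)" by (rule ext) simp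
      show ?thesis unfolding prod.distrib e1 e2 prod_inversef Qp_def Rp_def ..
    qed
    then show "1 / ((of_nat l + 1)^2 * (Qp z (Suc l) * Rp z (Suc l))) =
       (1 / of_nat (Suc l) ^ 2) * (\<Prod>j=1..Suc l. inverse (1 - (-1 / of_nat j) * z) * inverse (1 - (1 / of_nat j) * z))"
      using alg7[of "of_nat l + 1" "Qp z (Suc l)" "Rp z (Suc l)"] by (simp add: add.commute)
  qed
  finally show ?thesis .
qed

lemma fps_identity: "(\<Sum>i<N. Fa i * Fw N i) = FG N"
proof (rule fps_exp_unique)
  show "(\<lambda>z. \<Sum>i<N. ((1 / of_nat (Suc i) ^ 2) * (\<Prod>j=1..i. 1 + (1 / of_nat j) * z) * inverse (1 - (-1 / of_nat (Suc i)) * z))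
            * (\<Prod>j\<in>{N-i..N}. inverse (1 - (1 / of_nat j) * z))) has_fps_expansion (\<Sum>i<N. Fa i * Fw N i)"
    unfolding Fa_def Fw_def by (intro fps_expansion_intros exp_QF exp_geo)
  show "(\<lambda>z. \<Sum>l<N. (1 / of_nat (Suc l) ^ 2) * (\<Prod>j=1..Suc l. inverse (1 - (-1 / of_nat j) * z) * inverse (1 - (1 / of_nat j) * z)))
        has_fps_expansion FG N"
    unfolding FG_def P2_def by (intro fps_expansion_intros exp_geo)
  show "eventually (\<lambda>z::complex. (\<Sum>i<N. ((1 / of_nat (Suc i) ^ 2) * (\<Prod>j=1..i. 1 + (1 / of_nat j) * z) * inverse (1 - (-1 / of_nat (Suc i)) * z))
            * (\<Prod>j\<in>{N-i..N}. inverse (1 - (1 / of_nat j) * z))) =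
       (\<Sum>l<N. (1 / of_nat (Suc l) ^ 2) * (\<Prod>j=1..Suc l. inverse (1 - (-1 / of_nat j) * z) * inverse (1 - (1 / of_nat j) * z)))) (nhds 0)"
  proof -
    have ev: "eventually (\<lambda>z. z \<in> ball (0::complex) (1/2)) (nhds 0)" by (rule eventually_nhds_ball) simp
    show ?thesis by (rule eventually_mono[OF ev]) (rule func_id, simp)
  qed
qed



definition Ac :: "nat \<Rightarrow> nat \<Rightarrow> real" where
  "Ac i p = (1 / real (Suc i)^2) * (\<Sum>r=0..p. ee r i * (-1 / real (Suc i))^(p-r))"
definition wr :: "nat \<Rightarrow> nat \<Rightarrow> nat \<Rightarrow> real" where
  "wr N i q = Re (fps_nth (Fw N i) q)"

lemma Fa_nth: "fps_nth (Fa i) p = of_real (Ac i p)"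
proof -
  have e: "Fa i = fps_const (1 / of_nat (Suc i) ^ 2) * (QF i * geo (-1 / of_nat (Suc i)))"
    unfolding Fa_def by (simp add: mult.assoc)
  have h1: "fps_nth (Fa i) p = (1 / of_nat (Suc i) ^ 2) * fps_nth (QF i * geo (-1 / of_nat (Suc i))) p"
    unfolding e by (simp only: fps_mult_left_const_nth)
  have h2: "fps_nth (QF i * geo (-1 / of_nat (Suc i))) p = (\<Sum>r=0..p. of_real (ee r i) * (-1 / of_nat (Suc i))^(p-r))"
    by (simp add: fps_mult_nth QF_nth del: of_nat_Suc)
  have h3: "(1 / of_nat (Suc i) ^ 2) * (\<Sum>r=0..p. of_real (ee r i) * (-1 / of_nat (Suc i))^(p-r)) = (of_real (Ac i p) :: complex)"
    unfolding Ac_def by (simp add: of_real_sum del: of_nat_Suc)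
  show ?thesis unfolding h1 h2 h3 ..
qed

lemma Fw_nth:
  assumes "i < N"
  shows "fps_nth (Fw N i) q = of_real (wr N i q) \<and> 0 \<le> wr N i q \<and> wr N i q \<le> (\<Sum>j\<in>{N-i..N}. 1 / real j)^q"
proof -
  have "0 \<notin> {N-i..N}" using assms by auto
  then obtain x where x: "fps_nth (Fw N i) q = of_real x" "0 \<le> x" "x \<le> (\<Sum>j\<in>{N-i..N}. 1 / real j)^q"
    using prodgeo_nth[of "{N-i..N}" q] unfolding Fw_def by auto
  then have "wr N i q = x" unfolding wr_def by simp
  then show ?thesis using x by simp
qed

lemma wr_0: "wr N i 0 = 1"
  unfolding wr_def Fw_def by (simp add: prodgeo_nth0)

lemma FG_nth: "fps_nth (FG N) n = (if even n then of_real (\<Sum>l<N. hh (n div 2) (Suc l) / real (Suc l)^2) else 0)"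
  unfolding FG_def by (simp add: fps_sum_nth P2_nth of_real_sum del: of_nat_Suc)

lemma coef_id:
  "(\<Sum>i<N. \<Sum>t=0..n. Ac i t * wr N i (n-t)) = (if even n then (\<Sum>l<N. hh (n div 2) (Suc l) / real (Suc l)^2) else 0)"
proof -
  have "fps_nth (\<Sum>i<N. Fa i * Fw N i) n = of_real (\<Sum>i<N. \<Sum>t=0..n. Ac i t * wr N i (n-t))"
    unfolding fps_sum_nth of_real_sum
  proof (intro sum.cong refl)
    fix i assume "i \<in> {..<N}"
    then have "i < N" by simp
    then show "fps_nth (Fa i * Fw N i) n = (\<Sum>t=0..n. of_real (Ac i t * wr N i (n-t)))"
      unfolding fps_mult_nth using Fw_nth by (simp add: Fa_nth)
  qed
  then show ?thesis unfolding fps_identity FG_nth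
    by (cases "even n") (simp_all del: of_real_sum)
qed



lemma infsum_exhaust:
  fixes f :: "'a \<Rightarrow> real"
  assumes nn: "\<And>x. x \<in> A \<Longrightarrow> 0 \<le> f x"
    and fin: "\<And>N. finite (B N)" and sub: "\<And>N. B N \<subseteq> A" and mono: "\<And>N. B N \<subseteq> B (Suc N)"
    and cover: "\<And>x. x \<in> A \<Longrightarrow> \<exists>N. x \<in> B N"
    and lim: "(\<lambda>N. sum f (B N)) \<longlonglongrightarrow> L"
  shows "infsum f A = L"
proof -
  have mono': "\<And>m n. m \<le> n \<Longrightarrow> B m \<subseteq> B n" by (rule lift_Suc_mono_le[of B]) (use mono in auto)
  have inc: "incseq (\<lambda>N. sum f (B N))"
    unfolding incseq_def
  proof (intro allI impI)
    fix m n :: nat assume "m \<le> n"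
    then show "sum f (B m) \<le> sum f (B n)"
      using fin by (intro sum_mono2 mono') (auto intro!: nn dest: subsetD[OF sub])
  qed
  have leL: "\<And>N. sum f (B N) \<le> L" using incseq_le[OF inc lim] .
  have cov: "\<And>F. finite F \<Longrightarrow> F \<subseteq> A \<Longrightarrow> \<exists>N. F \<subseteq> B N"
  proof -
    fix F assume "finite F" "F \<subseteq> A"
    then show "\<exists>N. F \<subseteq> B N"
    proof (induction F rule: finite_induct)
      case empty then show ?case by auto
    next
      case (insert x F)
      then obtain N1 where "F \<subseteq> B N1" by auto
      moreover obtain N2 where "x \<in> B N2" using cover[of x] insert.prems by blast
      ultimately have "insert x F \<subseteq> B (max N1 N2)" using mono'[of N1 "max N1 N2"] mono'[of N2 "max N1 N2"] by auto
      then show ?case by blast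
    qed
  qed
  have bnd: "\<And>F. finite F \<Longrightarrow> F \<subseteq> A \<Longrightarrow> sum f F \<le> L"
  proof -
    fix F assume F: "finite F" "F \<subseteq> A"
    then obtain N where N: "F \<subseteq> B N" using cov by blast
    have "sum f F \<le> sum f (B N)" using N fin by (intro sum_mono2) (auto intro!: nn dest: subsetD[OF sub])
    then show "sum f F \<le> L" using leL[of N] by simp
  qed
  have summ: "f summable_on A"
    by (rule nonneg_bdd_above_summable_on) (use nn bnd in \<open>auto intro!: bdd_aboveI[of _ L]\<close>)
  have eq: "infsum f A = (SUP F\<in>{F. finite F \<and> F \<subseteq> A}. sum f F)"
    by (rule infsum_nonneg_is_SUPREMUM_real[OF summ nn])
  have bdd: "bdd_above (sum f ` {F. finite F \<and> F \<subseteq> A})"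
    using bnd by (auto intro!: bdd_aboveI[of _ L])
  have "(SUP F\<in>{F. finite F \<and> F \<subseteq> A}. sum f F) \<le> L"
    by (rule cSUP_least) (use bnd in auto)
  moreover have "L \<le> (SUP F\<in>{F. finite F \<and> F \<subseteq> A}. sum f F)"
  proof (rule LIMSEQ_le_const2[OF lim], intro exI allI impI)
    fix n show "sum f (B n) \<le> (SUP F\<in>{F. finite F \<and> F \<subseteq> A}. sum f F)"
      by (rule cSUP_upper[OF _ bdd]) (use fin sub in auto)
  qed
  ultimately show ?thesis using eq by simp
qed

definition SIle :: "nat \<Rightarrow> nat \<Rightarrow> nat list set" where
  "SIle r N = {xs. length xs = r \<and> sorted_wrt (<) xs \<and> (\<forall>x\<in>set xs. 1 \<le> x \<and> x \<le> N)}"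
definition SNle :: "nat \<Rightarrow> nat \<Rightarrow> nat list set" where
  "SNle r N = {xs. length xs = r \<and> sorted_wrt (\<le>) xs \<and> (\<forall>x\<in>set xs. 1 \<le> x \<and> x \<le> N)}"

lemma finite_SIle: "finite (SIle r N)"
  by (rule finite_subset[OF _ finite_lists_length_eq[OF finite_atLeastAtMost[of 1 N], of r]])
     (auto simp: SIle_def)

lemma finite_SNle: "finite (SNle r N)"
  by (rule finite_subset[OF _ finite_lists_length_eq[OF finite_atLeastAtMost[of 1 N], of r]])
     (auto simp: SNle_def)

lemma snoc_split:
  assumes "length ys = Suc r"
  shows "ys = butlast ys @ [last ys]" "length (butlast ys) = r"
  using assms by (metis append_butlast_last_id length_greater_0_conv zero_less_Suc) (simp add: assms)

lemma SIle_Suc: "SIle (Suc r) N = (\<Union>j\<in>{1..N}. (\<lambda>xs. xs @ [j]) ` SIle r (j-1))"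
proof (intro equalityI subsetI)
  fix ys assume ys: "ys \<in> SIle (Suc r) N"
  then have l: "length ys = Suc r" by (simp add: SIle_def)
  note sp = snoc_split[OF l]
  define j where "j = last ys"
  define xs where "xs = butlast ys"
  have yx: "ys = xs @ [j]" unfolding xs_def j_def using sp by simp
  have "sorted_wrt (<) (xs @ [j])" "\<forall>x\<in>set (xs @ [j]). 1 \<le> x \<and> x \<le> N"
    using ys unfolding yx by (auto simp: SIle_def)
  then have "j \<in> {1..N}" "xs \<in> SIle r (j-1)"
    using sp(2) unfolding xs_def[symmetric] by (auto simp: SIle_def sorted_wrt_append)
  then show "ys \<in> (\<Union>j\<in>{1..N}. (\<lambda>xs. xs @ [j]) ` SIle r (j-1))" unfolding yx by blast
next
  fix ys assume "ys \<in> (\<Union>j\<in>{1..N}. (\<lambda>xs. xs @ [j]) ` SIle r (j-1))"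
  then obtain j xs where j: "j \<in> {1..N}" and xs: "xs \<in> SIle r (j-1)" and yx: "ys = xs @ [j]" by auto
  then show "ys \<in> SIle (Suc r) N"
    unfolding yx using xs j by (auto simp: SIle_def sorted_wrt_append)
qed

lemma SNle_Suc: "SNle (Suc r) N = (\<Union>j\<in>{1..N}. (\<lambda>xs. xs @ [j]) ` SNle r j)"
proof (intro equalityI subsetI)
  fix ys assume ys: "ys \<in> SNle (Suc r) N"
  then have l: "length ys = Suc r" by (simp add: SNle_def)
  note sp = snoc_split[OF l]
  define j where "j = last ys"
  define xs where "xs = butlast ys"
  have yx: "ys = xs @ [j]" unfolding xs_def j_def using sp by simp
  have "sorted_wrt (\<le>) (xs @ [j])" "\<forall>x\<in>set (xs @ [j]). 1 \<le> x \<and> x \<le> N"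
    using ys unfolding yx by (auto simp: SNle_def)
  then have "j \<in> {1..N}" "xs \<in> SNle r j"
    using sp(2) unfolding xs_def[symmetric] by (auto simp: SNle_def sorted_wrt_append)
  then show "ys \<in> (\<Union>j\<in>{1..N}. (\<lambda>xs. xs @ [j]) ` SNle r j)" unfolding yx by blast
next
  fix ys assume "ys \<in> (\<Union>j\<in>{1..N}. (\<lambda>xs. xs @ [j]) ` SNle r j)"
  then obtain j xs where j: "j \<in> {1..N}" and xs: "xs \<in> SNle r j" and yx: "ys = xs @ [j]" by auto
  then show "ys \<in> SNle (Suc r) N"
    unfolding yx using xs j by (auto simp: SNle_def sorted_wrt_append)
qed

lemma sum_snoc_union:
  fixes g :: "nat list \<Rightarrow> real"
  assumes "\<And>j. finite (S j)"
  shows "sum g (\<Union>j\<in>{1..N}. (\<lambda>xs. xs @ [j]) ` S j) = (\<Sum>j=1..N. \<Sum>xs\<in>S j. g (xs @ [j]))"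
proof -
  have "sum g (\<Union>j\<in>{1..N}. (\<lambda>xs. xs @ [j]) ` S j) = (\<Sum>j=1..N. sum g ((\<lambda>xs. xs @ [j]) ` S j))"
    by (rule sum.UNION_disjoint) (use assms in auto)
  also have "\<dots> = (\<Sum>j=1..N. \<Sum>xs\<in>S j. g (xs @ [j]))"
  proof (rule sum.cong[OF refl])
    fix j
    have inj: "inj_on (\<lambda>xs. xs @ [j]) (S j)" by (auto simp: inj_on_def)
    show "sum g ((\<lambda>xs. xs @ [j]) ` S j) = (\<Sum>xs\<in>S j. g (xs @ [j]))"
      using sum.reindex[OF inj, of g] by (simp add: o_def)
  qed
  finally show ?thesis .
qed

lemma ee_list: "ee r k = (\<Sum>xs\<in>SIle r k. prod_list (map (\<lambda>x. 1 / real x) xs))"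
proof (induction r arbitrary: k)
  case 0
  have "SIle 0 k = {[]}" by (auto simp: SIle_def)
  then show ?case by simp
next
  case (Suc r)
  have "(\<Sum>xs\<in>SIle (Suc r) k. prod_list (map (\<lambda>x. 1 / real x) xs))
      = (\<Sum>j=1..k. \<Sum>xs\<in>SIle r (j-1). prod_list (map (\<lambda>x. 1 / real x) (xs @ [j])))"
    unfolding SIle_Suc by (rule sum_snoc_union) (rule finite_SIle)
  also have "\<dots> = (\<Sum>j=1..k. ee r (j-1) / real j)"
    by (simp add: Suc sum_divide_distrib)
  finally show ?case by simp
qed

lemma hh_list: "hh m l = (\<Sum>xs\<in>SNle m l. prod_list (map (\<lambda>x. 1 / real x ^ 2) xs))"
proof (induction m arbitrary: l)
  case 0
  have "SNle 0 l = {[]}" by (auto simp: SNle_def)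
  then show ?case by simp
next
  case (Suc m)
  have "(\<Sum>xs\<in>SNle (Suc m) l. prod_list (map (\<lambda>x. 1 / real x ^ 2) xs))
      = (\<Sum>j=1..l. \<Sum>xs\<in>SNle m j. prod_list (map (\<lambda>x. 1 / real x ^ 2) (xs @ [j])))"
    unfolding SNle_Suc by (rule sum_snoc_union) (rule finite_SNle)
  also have "\<dots> = (\<Sum>j=1..l. hh m j / real j ^ 2)"
    by (simp add: Suc sum_divide_distrib)
  finally show ?case by simp
qed



lemma map2_rep: "length xs = r \<Longrightarrow> map2 (\<lambda>k a. 1 / real k ^ a) xs (replicate r a) = map (\<lambda>x. 1 / real x ^ a) xs"
  by (induction xs arbitrary: r) auto

lemma mzv_term_snoc:
  assumes "length xs = r"
  shows "mzv_term (replicate r a @ [s]) (xs @ [j]) = prod_list (map (\<lambda>x. 1 / real x ^ a) xs) * (1 / real j ^ s)"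
  unfolding mzv_term_def using assms by (simp add: map2_rep)

lemma mzv_term_nonneg: "0 \<le> mzv_term s ks"
  unfolding mzv_term_def by (rule prod_list_nonneg) auto

lemma sum_shift1: "(\<Sum>j=1..N. g j) = (\<Sum>i<N. g (Suc i))"
  by (induction N) simp_all

lemma trunc_mzv:
  "(\<Sum>ks\<in>SIle (Suc r) N. mzv_term (replicate r 1 @ [s]) ks) = (\<Sum>i<N. ee r i / real (Suc i) ^ s)"
proof -
  have "(\<Sum>ks\<in>SIle (Suc r) N. mzv_term (replicate r 1 @ [s]) ks)
     = (\<Sum>j=1..N. \<Sum>xs\<in>SIle r (j-1). mzv_term (replicate r 1 @ [s]) (xs @ [j]))"
    unfolding SIle_Suc by (rule sum_snoc_union) (rule finite_SIle)
  also have "\<dots> = (\<Sum>j=1..N. \<Sum>xs\<in>SIle r (j-1). prod_list (map (\<lambda>x. 1 / real x) xs) * (1 / real j ^ s))"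
    by (intro sum.cong refl) (auto simp: mzv_term_snoc[where a=1, simplified] SIle_def)
  also have "\<dots> = (\<Sum>j=1..N. ee (r) (j-1) / real j ^ s)"
    by (simp add: ee_list sum_divide_distrib)
  also have "\<dots> = (\<Sum>i<N. ee r i / real (Suc i) ^ s)" using sum_shift1[of "\<lambda>j. ee r (j-1) / real j ^ s" N] by simp
  finally show ?thesis .
qed

lemma trunc_star:
  "(\<Sum>ks\<in>SNle (Suc m) N. mzv_term (replicate (Suc m) 2) ks) = (\<Sum>i<N. hh m (Suc i) / real (Suc i) ^ 2)"
proof -
  have rep: "replicate (Suc m) (2::nat) = replicate m 2 @ [2]" by (simp add: replicate_append_same)
  have "(\<Sum>ks\<in>SNle (Suc m) N. mzv_term (replicate (Suc m) 2) ks)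
     = (\<Sum>j=1..N. \<Sum>xs\<in>SNle m j. mzv_term (replicate (Suc m) 2) (xs @ [j]))"
    unfolding SNle_Suc by (rule sum_snoc_union) (rule finite_SNle)
  also have "\<dots> = (\<Sum>j=1..N. \<Sum>xs\<in>SNle m j. prod_list (map (\<lambda>x. 1 / real x ^ 2) xs) * (1 / real j ^ 2))"
    unfolding rep by (intro sum.cong refl) (auto simp: mzv_term_snoc SNle_def)
  also have "\<dots> = (\<Sum>j=1..N. hh m j / real j ^ 2)"
    by (simp add: hh_list sum_divide_distrib)
  also have "\<dots> = (\<Sum>i<N. hh m (Suc i) / real (Suc i) ^ 2)" using sum_shift1[of "\<lambda>j. hh m j / real j ^ 2" N] by simp
  finally show ?thesis .
qed

lemma mzv_lim:
  assumes "(\<lambda>N. \<Sum>i<N. ee r i / real (Suc i) ^ s) \<longlonglongrightarrow> L"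
  shows "mzv (replicate r 1 @ [s]) = L"
  unfolding mzv_def
proof (rule infsum_exhaust[where B="\<lambda>N. SIle (Suc r) N"])
  show "\<And>x. 0 \<le> mzv_term (replicate r 1 @ [s]) x" by (rule mzv_term_nonneg)
  show "\<And>N. finite (SIle (Suc r) N)" by (rule finite_SIle)
  show "\<And>N. SIle (Suc r) N \<subseteq> {ks. length ks = length (replicate r 1 @ [s]) \<and> sorted_wrt (<) ks \<and> (\<forall>k\<in>set ks. 1 \<le> k)}"
    by (auto simp: SIle_def)
  show "\<And>N. SIle (Suc r) N \<subseteq> SIle (Suc r) (Suc N)" by (auto simp: SIle_def)
  show "\<And>x. x \<in> {ks. length ks = length (replicate r 1 @ [s]) \<and> sorted_wrt (<) ks \<and> (\<forall>k\<in>set ks. 1 \<le> k)} \<Longrightarrow> \<exists>N. x \<in> SIle (Suc r) N"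
    by (rule_tac x="sum_list x" in exI) (auto simp: SIle_def member_le_sum_list)
  show "(\<lambda>N. sum (mzv_term (replicate r 1 @ [s])) (SIle (Suc r) N)) \<longlonglongrightarrow> L"
    unfolding trunc_mzv by (rule assms)
qed

lemma mzv_star_lim:
  assumes "(\<lambda>N. \<Sum>i<N. hh m (Suc i) / real (Suc i) ^ 2) \<longlonglongrightarrow> L"
  shows "mzv_star (replicate (Suc m) 2) = L"
  unfolding mzv_star_def
proof (rule infsum_exhaust[where B="\<lambda>N. SNle (Suc m) N"])
  show "\<And>x. 0 \<le> mzv_term (replicate (Suc m) 2) x" by (rule mzv_term_nonneg)
  show "\<And>N. finite (SNle (Suc m) N)" by (rule finite_SNle)
  show "\<And>N. SNle (Suc m) N \<subseteq> {ks. length ks = length (replicate (Suc m) 2) \<and> sorted_wrt (\<le>) ks \<and> (\<forall>k\<in>set ks. 1 \<le> k)}"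
    by (auto simp: SNle_def)
  show "\<And>N. SNle (Suc m) N \<subseteq> SNle (Suc m) (Suc N)" by (auto simp: SNle_def)
  show "\<And>x. x \<in> {ks. length ks = length (replicate (Suc m) 2) \<and> sorted_wrt (\<le>) ks \<and> (\<forall>k\<in>set ks. 1 \<le> k)} \<Longrightarrow> \<exists>N. x \<in> SNle (Suc m) N"
    by (rule_tac x="sum_list x" in exI) (auto simp: SNle_def member_le_sum_list)
  show "(\<lambda>N. sum (mzv_term (replicate (Suc m) 2)) (SNle (Suc m) N)) \<longlonglongrightarrow> L"
    unfolding trunc_star by (rule assms)
qed



lemma ee_nonneg: "0 \<le> ee r i"
  by (induction r arbitrary: i) (auto intro!: sum_nonneg divide_nonneg_nonneg)

lemma ee_le_harm: "ee r i \<le> harm i ^ r"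
proof (induction r arbitrary: i)
  case 0 then show ?case by simp
next
  case (Suc r)
  have "ee (Suc r) i = (\<Sum>j=1..i. ee r (j-1) / real j)" by simp
  also have "\<dots> \<le> (\<Sum>j=1..i. harm i ^ r / real j)"
  proof (intro sum_mono divide_right_mono)
    fix j assume j: "j \<in> {1..i}"
    have "ee r (j-1) \<le> harm (j-1) ^ r" by (rule Suc.IH)
    also have "\<dots> \<le> harm i ^ r" by (intro power_mono harm_mono harm_nonneg) (use j in auto)
    finally show "ee r (j-1) \<le> harm i ^ r" .
  qed auto
  also have "\<dots> = harm i ^ r * harm i" by (simp add: harm_def sum_divide_distrib[symmetric] divide_inverse sum_distrib_left)
  finally show ?case by (simp add: mult.commute)
qed

lemma harm_le_ln: "harm n \<le> 1 + ln (real n + 1)"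
proof (cases n)
  case 0 then show ?thesis by (simp add: harm_def)
next
  case (Suc m)
  have "harm (Suc m) - ln (real (Suc m)) \<le> harm (Suc 0) - ln (real (Suc 0))"
    using decseq_harm_diff_ln unfolding decseq_def by (metis le0)
  then have "harm (Suc m) \<le> 1 + ln (real (Suc m))" by (simp add: harm_def)
  also have "\<dots> \<le> 1 + ln (real (Suc m) + 1)" by simp
  finally show ?thesis using Suc by simp
qed

lemma log_bound:
  fixes y :: real
  assumes y: "1 \<le> y" and K: "1 \<le> K"
  shows "(2 + ln y)^K \<le> (2 + 2 * real K)^K * y powr (1/2)"
proof -
  define u where "u = y powr (1 / (2 * real K))"
  have u1: "1 \<le> u" unfolding u_def using y K by (intro ge_one_powr_ge_zero) auto
  have lnu: "ln u = ln y / (2 * real K)" unfolding u_def using y by (simp add: ln_powr)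
  have "ln u \<le> u - 1" using u1 by (intro ln_le_minus_one) simp
  then have "ln y \<le> 2 * real K * u" using lnu K u1 by (simp add: field_simps)
  then have "2 + ln y \<le> (2 + 2 * real K) * u" using u1 by (simp add: algebra_simps)
  moreover have "0 \<le> 2 + ln y" using y by simp
  ultimately have "(2 + ln y)^K \<le> ((2 + 2 * real K) * u)^K" by (rule power_mono)
  also have "\<dots> = (2 + 2 * real K)^K * u^K" by (simp add: power_mult_distrib)
  also have "u^K = y powr (1/2)"
  proof -
    have "u^K = u powr (real K)" using u1 by (simp add: powr_realpow)
    also have "\<dots> = y powr (1/2)" unfolding u_def powr_powr using K by simp
    finally show ?thesis .
  qed
  finally show ?thesis .
qed

lemma powr_half_lim: "(\<lambda>N::nat. real (Suc N) powr (1/2) / real (Suc N)) \<longlonglongrightarrow> 0"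
  by real_asymp



lemma ee_bound:
  "ee r i \<le> (2 + 2 * real (Suc r))^(Suc r) * real (Suc i) powr (1/2)"
proof -
  define y where "y = real (Suc i)"
  have y1: "1 \<le> y" unfolding y_def by simp
  have l0: "0 \<le> ln y" using y1 by simp
  have "ee r i \<le> harm i ^ r" by (rule ee_le_harm)
  also have "\<dots> \<le> (2 + ln y) ^ r"
    using harm_le_ln[of i] harm_nonneg[of i] unfolding y_def by (intro power_mono) (auto simp: add.commute)
  also have "\<dots> \<le> (2 + ln y) ^ Suc r"
    using l0 by (intro power_increasing) auto
  also have "\<dots> \<le> (2 + 2 * real (Suc r))^(Suc r) * y powr (1/2)"
    by (rule log_bound[OF y1]) simp
  finally show ?thesis unfolding y_def .
qed

lemma summable_ee:
  assumes "2 \<le> s"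
  shows "summable (\<lambda>i. ee r i / real (Suc i) ^ s)"
proof (rule summable_comparison_test'[where N=0])
  define C where "C = (2 + 2 * real (Suc r))^(Suc r)"
  have sp: "summable (\<lambda>i. real (Suc i) powr (-3/2))"
    using summable_Suc_iff[of "\<lambda>n. real n powr (-3/2)"] summable_real_powr_iff[of "-3/2"] by simp
  show "summable (\<lambda>i. C * real (Suc i) powr (-3/2))" by (rule summable_mult[OF sp])
  fix i :: nat
  define y where "y = real (Suc i)"
  have y1: "1 \<le> y" unfolding y_def by simp
  have "norm (ee r i / real (Suc i) ^ s) = ee r i / y ^ s" unfolding y_def using ee_nonneg by simp
  also have "\<dots> \<le> ee r i / y ^ 2"
    using y1 assms ee_nonneg[of r i] by (intro divide_left_mono power_increasing mult_pos_pos) auto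
  also have "\<dots> \<le> C * y powr (1/2) / y ^ 2"
    using ee_bound[of r i] y1 unfolding C_def y_def by (intro divide_right_mono) auto
  also have "\<dots> = C * y powr (-3/2)"
  proof -
    have "y ^ 2 = y powr 2" using y1 by (simp add: powr_realpow)
    then have "y powr (1/2) / y ^ 2 = y powr (1/2) / y powr 2" by simp
    also have "\<dots> = y powr (1/2 - 2)" by (simp only: powr_diff)
    also have "(1/2::real) - 2 = -3/2" by simp
    finally have "y powr (1/2) / y ^ 2 = y powr (-3/2)" .
    then show ?thesis by (metis times_divide_eq_right)
  qed
  finally show "norm (ee r i / real (Suc i) ^ s) \<le> C * real (Suc i) powr (-3/2)" unfolding y_def .
qed



lemma pw_ineq:
  fixes a b c :: real
  assumes "0 < a" "0 < b" "0 < c" "c \<le> a + b"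
  shows "1 / (a * b^2) \<le> (1/c) * (1/(a*b) + 1/b^2)"
proof -
  have e1: "(1/c) * (1/(a*b) + 1/b^2) = (a+b) / (c * (a*b^2))"
    using assms by (simp add: field_simps power2_eq_square)
  have e2: "1 / (a * b^2) = c / (c * (a*b^2))" using assms by simp
  have "c / (c * (a*b^2)) \<le> (a+b) / (c * (a*b^2))"
    using assms by (intro divide_right_mono) auto
  then show ?thesis unfolding e1 e2 .
qed

lemma harm_lessThan: "harm N = (\<Sum>i<N. 1 / real (Suc i))"
  unfolding harm_altdef by (simp add: divide_inverse)

lemma harm_atLeast: "harm N = (\<Sum>j\<in>{1..N}. 1 / real j)"
  unfolding harm_def by (simp add: divide_inverse)

lemma D_le_harm:
  assumes "i < N"
  shows "(\<Sum>j\<in>{N-i..N}. 1 / real j) \<le> harm N"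
  unfolding harm_atLeast using assms by (intro sum_mono2) auto

lemma Dsum:
  "(\<Sum>i<N. (\<Sum>j\<in>{N-i..N}. 1 / real j) / real (Suc i)^2) \<le> (harm N ^ 2 + harm N) / real (Suc N)"
proof -
  have "(\<Sum>i<N. (\<Sum>j\<in>{N-i..N}. 1 / real j) / real (Suc i)^2)
      = (\<Sum>i<N. \<Sum>j\<in>{N-i..N}. 1 / (real j * real (Suc i)^2))"
    by (simp add: sum_divide_distrib)
  also have "\<dots> \<le> (\<Sum>i<N. \<Sum>j\<in>{N-i..N}. (1 / real (Suc N)) * (1 / (real j * real (Suc i)) + 1 / real (Suc i)^2))"
  proof (intro sum_mono)
    fix i j assume i: "i \<in> {..<N}" and j: "j \<in> {N-i..N}"
    then show "1 / (real j * real (Suc i)^2) \<le> (1 / real (Suc N)) * (1 / (real j * real (Suc i)) + 1 / real (Suc i)^2)"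
      by (intro pw_ineq) auto
  qed
  also have "\<dots> = (1 / real (Suc N)) * ((\<Sum>i<N. \<Sum>j\<in>{N-i..N}. 1 / (real j * real (Suc i))) + (\<Sum>i<N. \<Sum>j\<in>{N-i..N}. 1 / real (Suc i)^2))"
    by (simp only: sum_distrib_left[symmetric] sum.distrib)
  also have "(\<Sum>i<N. \<Sum>j\<in>{N-i..N}. 1 / real (Suc i)^2) = harm N"
  proof -
    have "(\<Sum>i<N. \<Sum>j\<in>{N-i..N}. 1 / real (Suc i)^2) = (\<Sum>i<N. 1 / real (Suc i))"
    proof (intro sum.cong refl)
      fix i assume "i \<in> {..<N}"
      then have "card {N-i..N} = Suc i" by auto
      then show "(\<Sum>j\<in>{N-i..N}. 1 / real (Suc i)^2) = 1 / real (Suc i)"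
        by (simp add: power2_eq_square del: of_nat_Suc)
    qed
    then show ?thesis by (simp add: harm_lessThan)
  qed
  also have "(\<Sum>i<N. \<Sum>j\<in>{N-i..N}. 1 / (real j * real (Suc i))) \<le> (\<Sum>i<N. \<Sum>j\<in>{1..N}. 1 / (real j * real (Suc i)))"
    by (intro sum_mono sum_mono2) auto
  also have "\<dots> = harm N ^ 2"
  proof -
    have "(\<Sum>i<N. \<Sum>j\<in>{1..N}. 1 / (real j * real (Suc i))) = (\<Sum>i<N. 1 / real (Suc i)) * (\<Sum>j\<in>{1..N}. 1 / real j)"
      unfolding sum_product by (intro sum.cong refl) simp
    also have "\<dots> = harm N ^ 2" unfolding harm_lessThan[symmetric] harm_atLeast[symmetric] by (simp add: power2_eq_square)
    finally show ?thesis .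
  qed
  finally show ?thesis by (simp add: divide_right_mono)
qed



lemma harm_mono_r: "m \<le> n \<Longrightarrow> (harm m :: real) \<le> harm n" by (rule harm_mono)
lemma harm_nonneg_r: "0 \<le> (harm n :: real)" by (rule harm_nonneg)

definition Err :: "nat \<Rightarrow> nat \<Rightarrow> real" where
  "Err N n = (\<Sum>i<N. \<Sum>t<n. Ac i t * wr N i (n-t))"

lemma coef_split:
  "(\<Sum>i<N. Ac i n) + Err N n = (if even n then (\<Sum>l<N. hh (n div 2) (Suc l) / real (Suc l)^2) else 0)"
proof -
  have "(\<Sum>i<N. \<Sum>t=0..n. Ac i t * wr N i (n-t)) = (\<Sum>i<N. Ac i n + (\<Sum>t<n. Ac i t * wr N i (n-t)))"
  proof (intro sum.cong refl)
    fix i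
    have "{0..n} = insert n {..<n}" by auto
    then show "(\<Sum>t=0..n. Ac i t * wr N i (n-t)) = Ac i n + (\<Sum>t<n. Ac i t * wr N i (n-t))"
      by (simp add: wr_0)
  qed
  then show ?thesis using coef_id[of N n] unfolding Err_def by (simp add: sum.distrib)
qed

lemma Ac_bound:
  assumes "i < N" "t \<le> n"
  shows "\<bar>Ac i t\<bar> \<le> real (Suc n) * (1 + harm N)^n / real (Suc i)^2"
proof -
  define X :: real where "X = 1 + harm N"
  have X1: "1 \<le> X" unfolding X_def using harm_nonneg_r[of N] by simp
  have "\<bar>\<Sum>r=0..t. ee r i * (-1 / real (Suc i))^(t-r)\<bar> \<le> (\<Sum>r=0..t. \<bar>ee r i * (-1 / real (Suc i))^(t-r)\<bar>)"
    by (rule sum_abs)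
  also have "\<dots> \<le> (\<Sum>r=0..t. X^n)"
  proof (intro sum_mono)
    fix r assume r: "r \<in> {0..t}"
    have a1: "\<bar>(-1 / real (Suc i))^(t-r)\<bar> \<le> 1"
      by (simp add: power_abs power_le_one)
    have "ee r i \<le> harm i ^ r" by (rule ee_le_harm)
    also have "\<dots> \<le> X ^ r" unfolding X_def using harm_mono_r[of i N] assms harm_nonneg_r[of i]
      by (intro power_mono) auto
    also have "\<dots> \<le> X ^ n" using X1 r assms by (intro power_increasing) auto
    finally have "\<bar>ee r i\<bar> \<le> X^n" using ee_nonneg[of r i] by simp
    then have "\<bar>ee r i\<bar> * \<bar>(-1 / real (Suc i))^(t-r)\<bar> \<le> X^n * 1"
      using a1 X1 by (intro mult_mono) auto
    then show "\<bar>ee r i * (-1 / real (Suc i))^(t-r)\<bar> \<le> X^n"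
      by (simp only: abs_mult mult_1_right)
  qed
  also have "\<dots> = real (Suc t) * X^n" by simp
  also have "\<dots> \<le> real (Suc n) * X^n" using assms X1 by (intro mult_right_mono) auto
  finally have h: "\<bar>\<Sum>r=0..t. ee r i * (-1 / real (Suc i))^(t-r)\<bar> \<le> real (Suc n) * X^n" .
  have "\<bar>Ac i t\<bar> = \<bar>\<Sum>r=0..t. ee r i * (-1 / real (Suc i))^(t-r)\<bar> / real (Suc i)^2"
    unfolding Ac_def by (simp add: abs_mult)
  also have "\<dots> \<le> real (Suc n) * X^n / real (Suc i)^2"
    using h by (intro divide_right_mono) auto
  finally show ?thesis unfolding X_def .
qed

lemma wr_bound:
  assumes "i < N" "t < n"
  shows "\<bar>wr N i (n-t)\<bar> \<le> (\<Sum>j\<in>{N-i..N}. 1 / real j) * (1 + harm N)^n"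
proof -
  define D where "D = (\<Sum>j\<in>{N-i..N}. 1 / real j)"
  define X :: real where "X = 1 + harm N"
  have D0: "0 \<le> D" unfolding D_def by (intro sum_nonneg) auto
  have DX: "D \<le> X" unfolding D_def X_def using D_le_harm[OF assms(1)] by simp
  have X1: "1 \<le> X" unfolding X_def using harm_nonneg_r[of N] by simp
  obtain q where q: "n - t = Suc q" "q \<le> n" using assms by (metis Suc_diff_Suc diff_le_self le_trans)
  have "\<bar>wr N i (n-t)\<bar> \<le> D ^ (n-t)" using Fw_nth[OF assms(1), of "n-t"] unfolding D_def by simp
  also have "\<dots> = D * D^q" using q by simp
  also have "\<dots> \<le> D * X^q" using D0 DX by (intro mult_left_mono power_mono) auto
  also have "\<dots> \<le> D * X^n" using D0 X1 q by (intro mult_left_mono power_increasing) auto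
  finally show ?thesis unfolding D_def X_def .
qed

lemma Err_bound:
  "\<bar>Err N n\<bar> \<le> real n * real (Suc n) * (1 + harm N)^(2*n+2) / real (Suc N)"
proof -
  define X :: real where "X = 1 + harm N"
  have X1: "1 \<le> X" unfolding X_def using harm_nonneg_r[of N] by simp
  have "\<bar>Err N n\<bar> \<le> (\<Sum>i<N. \<Sum>t<n. \<bar>Ac i t * wr N i (n-t)\<bar>)"
    unfolding Err_def by (rule order_trans[OF sum_abs sum_mono]) (rule sum_abs)
  also have "\<dots> \<le> (\<Sum>i<N. \<Sum>t<n. real (Suc n) * X^n / real (Suc i)^2 * ((\<Sum>j\<in>{N-i..N}. 1 / real j) * X^n))"
  proof (intro sum_mono)
    fix i t assume i: "i \<in> {..<N}" and t: "t \<in> {..<n}"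
    show "\<bar>Ac i t * wr N i (n-t)\<bar> \<le> real (Suc n) * X^n / real (Suc i)^2 * ((\<Sum>j\<in>{N-i..N}. 1 / real j) * X^n)"
      unfolding abs_mult X_def using Ac_bound[of i N t n] wr_bound[of i N t n] i t
      by (intro mult_mono) auto
  qed
  also have "\<dots> = real n * real (Suc n) * X^(2*n) * (\<Sum>i<N. (\<Sum>j\<in>{N-i..N}. 1 / real j) / real (Suc i)^2)"
  proof -
    define Dd where "Dd i = (\<Sum>j\<in>{N-i..N}. 1 / real j)" for i
    have "(\<Sum>i<N. \<Sum>t<n. real (Suc n) * X^n / real (Suc i)^2 * (Dd i * X^n))
        = (\<Sum>i<N. (real n * real (Suc n) * X^(2*n)) * (Dd i / real (Suc i)^2))"
    proof (intro sum.cong refl)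
      fix i
      have "(\<Sum>t<n. real (Suc n) * X^n / real (Suc i)^2 * (Dd i * X^n)) = real n * (real (Suc n) * X^n / real (Suc i)^2 * (Dd i * X^n))"
        by simp
      also have "\<dots> = (real n * real (Suc n) * (X^n * X^n)) * (Dd i / real (Suc i)^2)"
        by (simp only: divide_inverse mult_ac)
      also have "X^n * X^n = X^(2*n)" by (simp add: mult_2 power_add)
      finally show "(\<Sum>t<n. real (Suc n) * X^n / real (Suc i)^2 * (Dd i * X^n)) = (real n * real (Suc n) * X^(2*n)) * (Dd i / real (Suc i)^2)" .
    qed
    also have "\<dots> = real n * real (Suc n) * X^(2*n) * (\<Sum>i<N. Dd i / real (Suc i)^2)"
      by (simp add: sum_distrib_left)
    finally show ?thesis unfolding Dd_def .
  qed
  also have "\<dots> \<le> real n * real (Suc n) * X^(2*n) * ((harm N ^ 2 + harm N) / real (Suc N))"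
    using X1 by (intro mult_left_mono Dsum) auto
  also have "\<dots> \<le> real n * real (Suc n) * X^(2*n) * (X^2 / real (Suc N))"
  proof -
    have "harm N ^ 2 + harm N \<le> X^2" unfolding X_def using harm_nonneg_r[of N] by (simp add: power2_eq_square algebra_simps)
    then show ?thesis using X1 by (intro mult_left_mono divide_right_mono) auto
  qed
  also have "\<dots> = real n * real (Suc n) * X^(2*n+2) / real (Suc N)" by (simp add: power_add power2_eq_square)
  finally show ?thesis unfolding X_def .
qed

lemma Err_lim: "(\<lambda>N. Err N n) \<longlonglongrightarrow> 0"
proof (rule Lim_null_comparison)
  define C where "C = real n * real (Suc n) * (2 + 2 * real (2*n+2))^(2*n+2)"
  show "eventually (\<lambda>N. norm (Err N n) \<le> C * (real (Suc N) powr (1/2) / real (Suc N))) sequentially"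
  proof (intro always_eventually allI)
    fix N
    define Y where "Y = real (Suc N)"
    have Y1: "1 \<le> Y" unfolding Y_def by simp
    have X: "1 + harm N \<le> 2 + ln Y" using harm_le_ln[of N] unfolding Y_def by (simp add: add.commute)
    have "(1 + harm N)^(2*n+2) \<le> (2 + ln Y)^(2*n+2)"
      using X harm_nonneg_r[of N] by (intro power_mono) auto
    also have "\<dots> \<le> (2 + 2 * real (2*n+2))^(2*n+2) * Y powr (1/2)"
      by (rule log_bound[OF Y1]) simp
    finally have b: "(1 + harm N)^(2*n+2) \<le> (2 + 2 * real (2*n+2))^(2*n+2) * Y powr (1/2)" .
    have "norm (Err N n) \<le> real n * real (Suc n) * (1 + harm N)^(2*n+2) / real (Suc N)"
      using Err_bound by simp
    also have "\<dots> \<le> real n * real (Suc n) * ((2 + 2 * real (2*n+2))^(2*n+2) * Y powr (1/2)) / Y"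
      unfolding Y_def[symmetric] using b Y1 by (intro divide_right_mono mult_left_mono) auto
    also have "\<dots> = C * (Y powr (1/2) / Y)" unfolding C_def by simp
    finally show "norm (Err N n) \<le> C * (real (Suc N) powr (1/2) / real (Suc N))" unfolding Y_def .
  qed
  show "(\<lambda>N. C * (real (Suc N) powr (1/2) / real (Suc N))) \<longlonglongrightarrow> 0"
    using tendsto_mult_right_zero[OF powr_half_lim, of C] by simp
qed



lemma Ac_term:
  assumes "r \<le> n"
  shows "(1 / real (Suc i)^2) * (ee r i * (-1 / real (Suc i))^(n-r)) = (-1)^(r+n) * (ee r i / real (Suc i) ^ (n+2-r))"
proof -
  define y where "y = real (Suc i)"
  have y0: "y \<noteq> 0" unfolding y_def by simp
  have e1: "(-1 / y)^(n-r) = (-1)^(n-r) / y^(n-r)" by (rule power_divide)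
  have nr: "n+2-r = 2 + (n-r)" using assms by simp
  have e2: "y ^ (n+2-r) = y^2 * y^(n-r)" unfolding nr by (rule power_add)
  have e3: "(-1::real)^(r+n) = (-1)^(n-r)"
  proof -
    have h: "r + n = (n - r) + 2*r" using assms by simp
    have "(-1::real)^(r+n) = (-1)^((n-r) + 2*r)" unfolding h ..
    also have "\<dots> = (-1)^(n-r) * ((-1)^2)^r" by (simp only: power_add power_mult)
    also have "\<dots> = (-1)^(n-r)" by simp
    finally show ?thesis .
  qed
  show ?thesis unfolding y_def[symmetric] e1 e2 e3 using y0 by (simp add: field_simps)
qed

lemma Ac_sum:
  "(\<Sum>i<N. Ac i n) = (\<Sum>r=0..n. (-1)^(r+n) * (\<Sum>i<N. ee r i / real (Suc i) ^ (n+2-r)))"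
proof -
  have "(\<Sum>i<N. Ac i n) = (\<Sum>i<N. \<Sum>r=0..n. (-1)^(r+n) * (ee r i / real (Suc i) ^ (n+2-r)))"
    unfolding Ac_def sum_distrib_left by (intro sum.cong refl Ac_term) auto
  also have "\<dots> = (\<Sum>r=0..n. \<Sum>i<N. (-1)^(r+n) * (ee r i / real (Suc i) ^ (n+2-r)))"
    by (rule sum.swap)
  also have "\<dots> = (\<Sum>r=0..n. (-1)^(r+n) * (\<Sum>i<N. ee r i / real (Suc i) ^ (n+2-r)))"
    by (simp add: sum_distrib_left)
  finally show ?thesis .
qed

theorem proposition4p2:
  fixes n :: nat
  shows "(\<Sum>r=0..n. (-1::real) ^ (r + n) * mzv (replicate r 1 @ [n + 2 - r])) =
         (if even n then mzv_star (replicate (n div 2 + 1) 2) else 0)"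
proof -
  define L where "L = (\<Sum>r=0..n. (-1::real) ^ (r + n) * mzv (replicate r 1 @ [n + 2 - r]))"
  have T: "(\<lambda>N. \<Sum>i<N. ee r i / real (Suc i) ^ (n+2-r)) \<longlonglongrightarrow> mzv (replicate r 1 @ [n + 2 - r])"
    if r: "r \<in> {0..n}" for r
  proof -
    have s: "summable (\<lambda>i. ee r i / real (Suc i) ^ (n+2-r))" using r by (intro summable_ee) auto
    have lim: "(\<lambda>N. \<Sum>i<N. ee r i / real (Suc i) ^ (n+2-r)) \<longlonglongrightarrow> suminf (\<lambda>i. ee r i / real (Suc i) ^ (n+2-r))"
      by (rule summable_LIMSEQ[OF s])
    have "mzv (replicate r 1 @ [n + 2 - r]) = suminf (\<lambda>i. ee r i / real (Suc i) ^ (n+2-r))"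
      by (rule mzv_lim[OF lim])
    then show ?thesis using lim by simp
  qed
  have lim1: "(\<lambda>N. \<Sum>i<N. Ac i n) \<longlonglongrightarrow> L"
    unfolding Ac_sum L_def by (intro tendsto_sum tendsto_mult_left T)
  have lim2: "(\<lambda>N. (\<Sum>i<N. Ac i n) + Err N n) \<longlonglongrightarrow> L + 0"
    by (intro tendsto_add lim1 Err_lim)
  have lim3: "(\<lambda>N. if even n then (\<Sum>l<N. hh (n div 2) (Suc l) / real (Suc l)^2) else 0) \<longlonglongrightarrow> L"
    using lim2 unfolding coef_split by simp
  show ?thesis
  proof (cases "even n")
    case True
    then have "(\<lambda>N. \<Sum>l<N. hh (n div 2) (Suc l) / real (Suc l)^2) \<longlonglongrightarrow> L" using lim3 by simp
    then have "mzv_star (replicate (Suc (n div 2)) 2) = L" by (rule mzv_star_lim)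
    then show ?thesis using True unfolding L_def by simp
  next
    case False
    then have "(\<lambda>N. 0::real) \<longlonglongrightarrow> L" using lim3 by simp
    then have "L = 0" using LIMSEQ_unique tendsto_const by blast
    then show ?thesis using False unfolding L_def by simp
  qed
qed


end
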